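(* (General exclusion rule for composite spin.) Consider a two-particle state of two particles with the same spin $s$, with total spin $S$ and total third component $M$, formed in a common canonical spin quantization frame as $$|S,M:(Q_a,\mathbf{p}_a,s)^1;(Q_b,\mathbf{p}_b,s)^2\rangle^C=\sum_{m_a,m_b}C^{ssS}_{m_a m_b M}\,|(Q_a,\mathbf{p}_a,s,m_a)^1;(Q_b,\mathbf{p}_b,s,m_b)^2\rangle^C .$$ Suppose all other quantum numbers of the two particles are identical: $\mathbf{p}_a=\mathbf{p}_b$ and $Q_a=Q_b$. Then the state vector vanishes whenever $S$ is odd. Hence only states of even total spin $S$ are allowed, for bosons and fermions alike. For $s=1/2$ this is the Pauli exclusion principle.
   Context: $C^{ssS}_{m_a m_b M}$ are the Clebsch–Gordan coefficients for coupling two spins $s$ to total spin $S$. They satisfy $C^{ssS}_{m_am_bM}=(-1)^{S-2s}C^{ssS}_{m_bm_aM}$. $|(Q_a,\mathbf{p}_a,s_a,m_a)^1;(Q_b,\mathbf{p}_b,s_b,m_b)^2\rangle^C$ denotes a single-valued but order-dependent two-particle state vector. In it, $Q$ denotes the intrinsic quantum numbers (rest mass, charge, etc.), $\mathbf{p}$ the momentum, $s$ the spin, and $m$ the third component of spin in a common canonical frame. Particle "1" has its spin frame rotation from its base frame into the canonical frame fixed as $R_a$, and particle "2"'s rotation is defined relative to it as $R_a R_{21}$ with $R_{21}=R_{\hat{\mathbf{k}}}(\pm\pi)$, a rotation by $\pi$ about the axis $\hat{\mathbf{k}}$ bisecting the two momenta. Under exchange of the variables $a\leftrightarrow b$, keeping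 the labels $1,2$ fixed, these vectors satisfy $$|(Q_b,\mathbf{p}_b,s_b,m_b)^1;(Q_a,\mathbf{p}_a,s_a,m_a)^2\rangle^C=(-1)^{2s_a}|(Q_a,\mathbf{p}_a,s_a,m_a)^1;(Q_b,\mathbf{p}_b,s_b,m_b)^2\rangle^C .$$ *)

theory Defs
  imports "HOL-Analysis.Analysis"
begin

definition is_spin :: "real \<Rightarrow> bool" where
  "is_spin s \<longleftrightarrow> 2 * s \<in> \<nat>"

definition projections :: "real \<Rightarrow> real set" where
  "projections s = {- s + real k | k. real k \<le> 2 * s}"

definition phase :: "real \<Rightarrow> real" where
  "phase x = (-1) powi \<lfloor>x\<rfloor>"

text \<open>Order-dependent two-particle kets are modelled by a function
  ket Qa pa sa ma Qb pb sb mb = |(Qa,pa,sa,ma)^1;(Qb,pb,sb,mb)^2>^C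
  with values in a complex vector space.
  Clebsch-Gordan coefficients: CG j1 j2 J m1 m2 M = C^{j1 j2 J}_{m1 m2 M}.\<close>

definition coupled_state ::
  "(real \<Rightarrow> real \<Rightarrow> real \<Rightarrow> real \<Rightarrow> real \<Rightarrow> real \<Rightarrow> real)
   \<Rightarrow> ('q \<Rightarrow> real^3 \<Rightarrow> real \<Rightarrow> real \<Rightarrow> 'q \<Rightarrow> real^3 \<Rightarrow> real \<Rightarrow> real \<Rightarrow> 'v::real_vector)
   \<Rightarrow> real \<Rightarrow> real \<Rightarrow> 'q \<Rightarrow> real^3 \<Rightarrow> real \<Rightarrow> 'q \<Rightarrow> real^3 \<Rightarrow> 'v" where
  "coupled_state CG ket S M Qa pa s Qb pb =
     (\<Sum>ma\<in>projections s. \<Sum>mb\<in>projections s.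
        CG s s S ma mb M *\<^sub>R ket Qa pa s ma Qb pb s mb)"

end

theory Submission
  imports Defs
begin

theorem mainTheorem2:
  fixes CG :: "real \<Rightarrow> real \<Rightarrow> real \<Rightarrow> real \<Rightarrow> real \<Rightarrow> real \<Rightarrow> real"
    and ket :: "'q \<Rightarrow> real^3 \<Rightarrow> real \<Rightarrow> real \<Rightarrow> 'q \<Rightarrow> real^3 \<Rightarrow> real \<Rightarrow> real \<Rightarrow> 'v::real_vector"
    and s :: real and S :: nat and M :: real
    and Qa Qb :: 'q and pa pb :: "real^3"
  assumes spin: "is_spin s"
    and CG_sym: "\<And>ma mb. ma \<in> projections s \<Longrightarrow> mb \<in> projections s \<Longrightarrow>
                   CG s s (real S) ma mb M = phase (real S - 2 * s) * CG s s (real S) mb ma M"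
    and exchange: "\<And>Q1 p1 s1 m1 Q2 p2 s2 m2.
                   is_spin s1 \<Longrightarrow> is_spin s2 \<Longrightarrow> m1 \<in> projections s1 \<Longrightarrow> m2 \<in> projections s2 \<Longrightarrow>
                   ket Q2 p2 s2 m2 Q1 p1 s1 m1 = phase (2 * s1) *\<^sub>R ket Q1 p1 s1 m1 Q2 p2 s2 m2"
    and same_p: "pa = pb" and same_Q: "Qa = Qb"
    and S_odd: "odd S"
  shows "coupled_state CG ket (real S) M Qa pa s Qb pb = 0"
proof -
  obtain n :: nat where n: "2 * s = real n" using spin unfolding is_spin_def by (auto elim: Nats_cases)
  have f1: "\<lfloor>real S - 2 * s\<rfloor> = int S - int n" using n by (metis floor_of_int of_int_diff of_int_of_nat_eq)
  have f2: "\<lfloor>2 * s\<rfloor> = int n" using n by simp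
  have "phase (real S - 2 * s) * phase (2 * s) = (-1) powi (int S - int n + int n)"
    unfolding phase_def f1 f2 by (subst power_int_add) auto
  also have "\<dots> = -1" using S_odd by (simp add: power_int_of_nat)
  finally have ph: "phase (real S - 2 * s) * phase (2 * s) = -1" .
  let ?P = "projections s"
  let ?k = "\<lambda>a b. ket Qa pa s a Qa pa s b"
  define X where "X = (\<Sum>a\<in>?P. \<Sum>b\<in>?P. CG s s (real S) a b M *\<^sub>R ?k a b)"
  have "X = (\<Sum>b\<in>?P. \<Sum>a\<in>?P. CG s s (real S) a b M *\<^sub>R ?k a b)"
    unfolding X_def by (rule sum.swap)
  also have "\<dots> = (\<Sum>b\<in>?P. \<Sum>a\<in>?P. (phase (real S - 2 * s) * phase (2 * s)) *\<^sub>R (CG s s (real S) b a M *\<^sub>R ?k b a))"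
  proof (intro sum.cong refl)
    fix a b assume a: "a \<in> ?P" and b: "b \<in> ?P"
    show "CG s s (real S) a b M *\<^sub>R ?k a b = (phase (real S - 2 * s) * phase (2 * s)) *\<^sub>R (CG s s (real S) b a M *\<^sub>R ?k b a)"
      using CG_sym[OF a b] exchange[OF spin spin b a, of Qa pa Qa pa] by simp
  qed
  also have "\<dots> = - X" unfolding ph X_def by (simp add: sum_negf)
  finally have "X = - X" .
  hence "X = 0" by (simp add: eq_neg_iff_add_eq_0 flip: scaleR_2)
  thus ?thesis unfolding coupled_state_def X_def using same_p same_Q by simp
qed

end
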